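(* Let $f:\mathbb{R}^d\times\mathcal{X}\to\mathbb{R}$ be differentiable in $\theta$, with $\mathcal{X}$ a subset of a Euclidean space, $\sup_{x\in\mathcal{X}}\Vert x\Vert\le D<\infty$ and $\sup_{x\in\mathcal{X}}\Vert\nabla f(0,x)\Vert\le E<\infty$. Assume (A1): there are $K_1,K_2>0$ with $\Vert\nabla f(\theta,x)-\nabla f(\hat\theta,\hat x)\Vert\le K_1\Vert\theta-\hat\theta\Vert+K_2\Vert x-\hat x\Vert(\Vert\theta\Vert+\Vert\hat\theta\Vert+1)$ for all $\theta,\hat\theta\in\mathbb{R}^d$, $x,\hat x\in\mathcal{X}$; (A3): there are $m>0,K>0$ with $\langle\nabla f(\theta_1,x)-\nabla f(\theta_2,x),\theta_1-\theta_2\rangle\ge m\Vert\theta_1-\theta_2\Vert^2-K$ for all $\theta_1,\theta_2,x$. Let $X_n=(x_1,\dots,x_n)$, $\hat X_n=(\hat x_1,\dots,\hat x_n)\in\mathcal{X}^n$ differ in at most one index, $b\in\{1,\dots,n\}$, $(\Omega_k)$ i.i.d. uniformly random $b$-subsets of $\{1,\dots,n\}$, and $$\theta_k=\theta_{k-1}-\tfrac\eta b\textstyle\sum_{i\in\Omega_k}\nabla f(\theta_{k-1},x_i),\qquad\hat\theta_k=\hat\theta_{k-1}-\tfrac\eta b\sum_{i\in\Omega_k}\nabla f(\hat\theta_{k-1},\hat x_i),$$ with $\theta_0=\hat\theta_0=\theta\in\mathbb{R}^d$. Assume $\eta<\min\left\{\frac1m,\frac{m}{K_1^2+64D^2K_2^2}\right\}$.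 Let $\nu_k,\hat\nu_k$ be the laws of $\theta_k,\hat\theta_k$, let $r:=\frac{E+\sqrt{E^2+4mK}}{2m}$ and $$B:=4\Vert\theta\Vert^2+4r^2+4-\frac{2\eta}{m}K_1^2-\frac{112\eta}{m}D^2K_2^2+\frac{128\eta}{m}D^2K_2^2r^2+\frac{4K}{m}+2r^2.$$ Then for all $k$, $$\mathcal{W}_2^2(\nu_k,\hat\nu_k)\le\left(1-(1-\eta m)^k\right)\left(\frac{4D^2K_2^2\eta(8B+2)}{bnm}+\frac{4K_2D(1+K_1\eta)}{nm}(1+5B)+\frac{2K}{m}\right).$$
   Context: $\mathcal{W}_2$ is the 2-Wasserstein distance: $\mathcal{W}_2(\mu,\nu)^2=\inf\mathbb{E}\Vert X-Y\Vert^2$ over couplings of $X\sim\mu$, $Y\sim\nu$. *)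

theory Defs
  imports "HOL-Probability.Probability"
begin

definition W2sq :: "'a::euclidean_space measure \<Rightarrow> 'a measure \<Rightarrow> ennreal" where
  "W2sq \<mu> \<nu> =
     (INF \<pi> \<in> {\<pi> :: ('a \<times> 'a) measure.
              sets \<pi> = sets borel \<and> prob_space \<pi> \<and>
              (\<forall>A \<in> sets (borel :: 'a measure).
                 emeasure \<pi> (A \<times> UNIV) = emeasure \<mu> A \<and>
                 emeasure \<pi> (UNIV \<times> A) = emeasure \<nu> A)}.
        \<integral>\<^sup>+ z. ennreal ((norm (fst z - snd z))\<^sup>2) \<partial>\<pi>)"

text \<open>All b-element subsets of the index set {0..<n} (indices shifted to start at 0).\<close>
definition minibatches :: "nat \<Rightarrow> nat \<Rightarrow> nat set set" where
  "minibatches n b = {S. S \<subseteq> {..<n} \<and> card S = b}"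

fun sgd_law :: "('a::euclidean_space \<Rightarrow> 'x \<Rightarrow> 'a) \<Rightarrow> (nat \<Rightarrow> 'x) \<Rightarrow> nat \<Rightarrow> nat \<Rightarrow> real \<Rightarrow> 'a
                 \<Rightarrow> nat \<Rightarrow> 'a pmf" where
  "sgd_law g xs n b \<eta> \<theta>0 0 = return_pmf \<theta>0"
| "sgd_law g xs n b \<eta> \<theta>0 (Suc k) =
     bind_pmf (sgd_law g xs n b \<eta> \<theta>0 k)
       (\<lambda>t. map_pmf (\<lambda>S. t - (\<eta> / real b) *\<^sub>R (\<Sum>i\<in>S. g t (xs i)))
              (pmf_of_set (minibatches n b)))"

end

theory Submission
  imports Defs
begin

lemma W2sq_pmf_le:
  fixes p :: "('a::euclidean_space \<times> 'a) pmf"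
  shows "W2sq (measure_pmf (map_pmf fst p)) (measure_pmf (map_pmf snd p))
         \<le> (\<integral>\<^sup>+ z. ennreal ((norm (fst z - snd z))\<^sup>2) \<partial>measure_pmf p)"
proof -
  define \<pi> where "\<pi> = distr (measure_pmf p) (borel :: ('a \<times> 'a) measure) (\<lambda>z. z)"
  have meas: "(\<lambda>z. z) \<in> measurable (measure_pmf p) (borel :: ('a \<times> 'a) measure)" by simp
  have mg: "(\<lambda>z. ennreal ((norm (fst z - snd z))\<^sup>2)) \<in> borel_measurable (borel::('a\<times>'a) measure)"
    by (intro measurable_compose[OF _ measurable_ennreal] borel_measurable_continuous_onI continuous_intros)
  have ps: "prob_space \<pi>" unfolding \<pi>_def by (rule measure_pmf.prob_space_distr[OF meas])
  have marg: "emeasure \<pi> (A \<times> UNIV) = emeasure (measure_pmf (map_pmf fst p)) A \<and>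
              emeasure \<pi> (UNIV \<times> A) = emeasure (measure_pmf (map_pmf snd p)) A"
    if A: "A \<in> sets (borel :: 'a measure)" for A
  proof -
    have s1: "A \<times> UNIV \<in> sets (borel :: ('a \<times> 'a) measure)" by (rule borel_Times[OF A]) simp
    have s2: "UNIV \<times> A \<in> sets (borel :: ('a \<times> 'a) measure)" by (rule borel_Times[OF _ A]) simp
    have "emeasure \<pi> (A \<times> UNIV) = emeasure (measure_pmf p) (A \<times> UNIV)"
      unfolding \<pi>_def by (subst emeasure_distr[OF meas s1]) simp
    also have "\<dots> = emeasure (measure_pmf (map_pmf fst p)) A"
      by (simp add: map_pmf_rep_eq emeasure_distr vimage_def) (rule arg_cong[where f="emeasure _"]; auto)
    finally have 1: "emeasure \<pi> (A \<times> UNIV) = emeasure (measure_pmf (map_pmf fst p)) A" .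
    have "emeasure \<pi> (UNIV \<times> A) = emeasure (measure_pmf p) (UNIV \<times> A)"
      unfolding \<pi>_def by (subst emeasure_distr[OF meas s2]) simp
    also have "\<dots> = emeasure (measure_pmf (map_pmf snd p)) A"
      by (simp add: map_pmf_rep_eq emeasure_distr vimage_def) (rule arg_cong[where f="emeasure _"]; auto)
    finally show ?thesis using 1 by simp
  qed
  have "W2sq (measure_pmf (map_pmf fst p)) (measure_pmf (map_pmf snd p))
        \<le> (\<integral>\<^sup>+ z. ennreal ((norm (fst z - snd z))\<^sup>2) \<partial>\<pi>)"
    unfolding W2sq_def
    by (rule INF_lower) (use ps marg in \<open>auto simp: \<pi>_def\<close>)
  also have "\<dots> = (\<integral>\<^sup>+ z. ennreal ((norm (fst z - snd z))\<^sup>2) \<partial>measure_pmf p)"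
    unfolding \<pi>_def using nn_integral_distr[OF meas, of "\<lambda>z. ennreal ((norm (fst z - snd z))\<^sup>2)"] mg by simp
  finally show ?thesis .
qed



lemma norm_diff_sq: "(norm (u - v))\<^sup>2 = (norm u)\<^sup>2 - 2 * (v \<bullet> u) + (norm (v::'a::real_inner))\<^sup>2"
  by (simp add: power2_norm_eq_inner inner_diff_left inner_diff_right inner_commute)

definition sstep :: "('a::euclidean_space \<Rightarrow> 'x \<Rightarrow> 'a) \<Rightarrow> (nat \<Rightarrow> 'x) \<Rightarrow> nat \<Rightarrow> real \<Rightarrow> 'a \<Rightarrow> nat set \<Rightarrow> 'a" where
  "sstep g h b \<eta> t S = t - (\<eta> / real b) *\<^sub>R (\<Sum>i\<in>S. g t (h i))"

lemma sgd_law_Suc': "sgd_law g h n b \<eta> \<theta> (Suc k) =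
   bind_pmf (sgd_law g h n b \<eta> \<theta> k) (\<lambda>t. map_pmf (sstep g h b \<eta> t) (pmf_of_set (minibatches n b)))"
  unfolding sstep_def[abs_def] by simp

fun cpl :: "('a::euclidean_space \<Rightarrow> 'x \<Rightarrow> 'a) \<Rightarrow> (nat \<Rightarrow> 'x) \<Rightarrow> (nat \<Rightarrow> 'x) \<Rightarrow> nat \<Rightarrow> nat \<Rightarrow> real \<Rightarrow> 'a \<Rightarrow> nat \<Rightarrow> ('a \<times> 'a) pmf" where
  "cpl g h h' n b \<eta> \<theta> 0 = return_pmf (\<theta>, \<theta>)"
| "cpl g h h' n b \<eta> \<theta> (Suc k) = bind_pmf (cpl g h h' n b \<eta> \<theta> k)
     (\<lambda>z. map_pmf (\<lambda>S. (sstep g h b \<eta> (fst z) S, sstep g h' b \<eta> (snd z) S)) (pmf_of_set (minibatches n b)))"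

lemma cpl_fst: "map_pmf fst (cpl g h h' n b \<eta> \<theta> k) = sgd_law g h n b \<eta> \<theta> k"
proof (induction k)
  case 0
  then show ?case by simp
next
  case (Suc k)
  have "map_pmf fst (cpl g h h' n b \<eta> \<theta> (Suc k)) =
        bind_pmf (cpl g h h' n b \<eta> \<theta> k) (\<lambda>z. map_pmf (sstep g h b \<eta> (fst z)) (pmf_of_set (minibatches n b)))"
    by (simp add: map_bind_pmf pmf.map_comp o_def)
  also have "\<dots> = bind_pmf (map_pmf fst (cpl g h h' n b \<eta> \<theta> k)) (\<lambda>t. map_pmf (sstep g h b \<eta> t) (pmf_of_set (minibatches n b)))"
    by (simp add: bind_map_pmf)
  also have "\<dots> = sgd_law g h n b \<eta> \<theta> (Suc k)"
    unfolding Suc sgd_law_Suc' ..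
  finally show ?case .
qed

lemma cpl_snd: "map_pmf snd (cpl g h h' n b \<eta> \<theta> k) = sgd_law g h' n b \<eta> \<theta> k"
proof (induction k)
  case 0
  then show ?case by simp
next
  case (Suc k)
  have "map_pmf snd (cpl g h h' n b \<eta> \<theta> (Suc k)) =
        bind_pmf (cpl g h h' n b \<eta> \<theta> k) (\<lambda>z. map_pmf (sstep g h' b \<eta> (snd z)) (pmf_of_set (minibatches n b)))"
    by (simp add: map_bind_pmf pmf.map_comp o_def)
  also have "\<dots> = bind_pmf (map_pmf snd (cpl g h h' n b \<eta> \<theta> k)) (\<lambda>t. map_pmf (sstep g h' b \<eta> t) (pmf_of_set (minibatches n b)))"
    by (simp add: bind_map_pmf)
  also have "\<dots> = sgd_law g h' n b \<eta> \<theta> (Suc k)"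
    unfolding Suc sgd_law_Suc' ..
  finally show ?case .
qed

locale sgd_setup =
  fixes g :: "'a::euclidean_space \<Rightarrow> 'x::euclidean_space \<Rightarrow> 'a"
    and X :: "'x set"
    and D E K1 K2 m K \<eta> :: real
    and n b :: nat
  assumes D_bound: "\<And>x. x \<in> X \<Longrightarrow> norm x \<le> D"
    and E_bound: "\<And>x. x \<in> X \<Longrightarrow> norm (g 0 x) \<le> E"
    and K1_pos: "K1 > 0" and K2_pos: "K2 > 0"
    and A1: "\<And>t t' x x'. x \<in> X \<Longrightarrow> x' \<in> X \<Longrightarrow>
               norm (g t x - g t' x') \<le> K1 * norm (t - t') + K2 * norm (x - x') * (norm t + norm t' + 1)"
    and m_pos: "m > 0" and K_pos: "K > 0"
    and A3: "\<And>t1 t2 x. x \<in> X \<Longrightarrow> (g t1 x - g t2 x) \<bullet> (t1 - t2) \<ge> m * (norm (t1 - t2))\<^sup>2 - K"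
    and b_ge: "1 \<le> b" and b_le: "b \<le> n"
    and eta_pos: "\<eta> > 0"
    and eta_m: "\<eta> * m < 1"
    and eta_K1: "\<eta> * K1\<^sup>2 \<le> m"
    and E_nn: "E \<ge> 0" and D_nn: "D \<ge> 0"
begin

lemma MB_finite: "finite (minibatches n b)"
  unfolding minibatches_def by (rule finite_subset[of _ "Pow {..<n}"]) auto

lemma MB_ne: "minibatches n b \<noteq> {}"
proof -
  have "{..<b} \<in> minibatches n b" using b_le unfolding minibatches_def by auto
  then show ?thesis by auto
qed

lemma MB_mem: "S \<in> minibatches n b \<Longrightarrow> S \<subseteq> {..<n} \<and> card S = b \<and> finite S"
  unfolding minibatches_def using b_ge by (auto intro: finite_subset)

lemma contr:
  fixes t t' :: 'a
  assumes S: "S \<in> minibatches n b" and h: "\<And>i. i < n \<Longrightarrow> h i \<in> X"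
  defines "a \<equiv> (1 / real b) *\<^sub>R (\<Sum>i\<in>S. g t (h i) - g t' (h i))"
  shows "(norm (t - t' - \<eta> *\<^sub>R a))\<^sup>2 \<le> (1 - \<eta> * m) * (norm (t - t'))\<^sup>2 + 2 * \<eta> * K"
    and "norm (t - t' - \<eta> *\<^sub>R a) \<le> (1 + \<eta> * K1) * norm (t - t')"
proof -
  have Sp: "S \<subseteq> {..<n}" "card S = b" "finite S" using MB_mem[OF S] by auto
  have bpos: "real b > 0" using b_ge by simp
  have hX: "i \<in> S \<Longrightarrow> h i \<in> X" for i using Sp h by auto
  have "(\<Sum>i\<in>S. (g t (h i) - g t' (h i)) \<bullet> (t - t')) \<ge> (\<Sum>i\<in>S. m * (norm (t - t'))\<^sup>2 - K)"
    by (rule sum_mono) (use A3 hX in auto)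
  then have i1: "a \<bullet> (t - t') \<ge> m * (norm (t - t'))\<^sup>2 - K"
    using Sp bpos by (simp add: a_def inner_sum_left field_simps)
  have "norm (\<Sum>i\<in>S. g t (h i) - g t' (h i)) \<le> (\<Sum>i\<in>S. K1 * norm (t - t'))"
  proof (rule order_trans[OF norm_sum], rule sum_mono)
    fix i assume "i \<in> S"
    then show "norm (g t (h i) - g t' (h i)) \<le> K1 * norm (t - t')"
      using A1[OF hX hX, of i i t t'] \<open>i \<in> S\<close> by simp
  qed
  then have i2: "norm a \<le> K1 * norm (t - t')"
    using Sp bpos by (simp add: a_def field_simps)
  have na: "(norm a)\<^sup>2 \<le> K1\<^sup>2 * (norm (t - t'))\<^sup>2"
    using i2 by (metis norm_ge_zero power_mono power_mult_distrib)
  have "(norm (t - t' - \<eta> *\<^sub>R a))\<^sup>2 = (norm (t - t'))\<^sup>2 - 2 * \<eta> * (a \<bullet> (t - t')) + \<eta>\<^sup>2 * (norm a)\<^sup>2"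
    by (simp add: norm_diff_sq[of "t - t'"] power_mult_distrib)
  also have "\<dots> \<le> (norm (t - t'))\<^sup>2 - 2 * \<eta> * (m * (norm (t - t'))\<^sup>2 - K) + \<eta>\<^sup>2 * (K1\<^sup>2 * (norm (t - t'))\<^sup>2)"
    using i1 na eta_pos by (intro add_mono diff_mono) (auto intro: mult_left_mono)
  also have "\<dots> \<le> (1 - \<eta> * m) * (norm (t - t'))\<^sup>2 + 2 * \<eta> * K"
  proof -
    have "\<eta>\<^sup>2 * K1\<^sup>2 \<le> \<eta> * m" using eta_K1 eta_pos by (simp add: power2_eq_square mult_left_mono mult.assoc)
    then have "\<eta>\<^sup>2 * (K1\<^sup>2 * (norm (t - t'))\<^sup>2) \<le> \<eta> * m * (norm (t - t'))\<^sup>2"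
      by (metis mult.assoc mult_right_mono zero_le_power2)
    then show ?thesis by (simp add: algebra_simps)
  qed
  finally show "(norm (t - t' - \<eta> *\<^sub>R a))\<^sup>2 \<le> (1 - \<eta> * m) * (norm (t - t'))\<^sup>2 + 2 * \<eta> * K" .
  have "norm (t - t' - \<eta> *\<^sub>R a) \<le> norm (t - t') + \<eta> * norm a"
    using norm_triangle_ineq4[of "t - t'" "\<eta> *\<^sub>R a"] eta_pos by simp
  also have "\<dots> \<le> norm (t - t') + \<eta> * (K1 * norm (t - t'))"
    using i2 eta_pos by (simp add: mult_left_mono)
  finally show "norm (t - t' - \<eta> *\<^sub>R a) \<le> (1 + \<eta> * K1) * norm (t - t')"
    by (simp add: algebra_simps)
qed

lemma moment_step:
  assumes S: "S \<in> minibatches n b" and h: "\<And>i. i < n \<Longrightarrow> h i \<in> X"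
    and t: "norm t \<le> M" and M: "m * M\<^sup>2 - 2 * E * M - 2 * K \<ge> 0" "\<eta> * E \<le> M"
  shows "norm (sstep g h b \<eta> t S) \<le> M"
proof -
  have Sp: "S \<subseteq> {..<n}" "card S = b" "finite S" using MB_mem[OF S] by auto
  have bpos: "real b > 0" using b_ge by simp
  have hX: "i \<in> S \<Longrightarrow> h i \<in> X" for i using Sp h by auto
  define a where "a = (1 / real b) *\<^sub>R (\<Sum>i\<in>S. g t (h i) - g 0 (h i))"
  define c where "c = (1 / real b) *\<^sub>R (\<Sum>i\<in>S. g 0 (h i))"
  have eq: "sstep g h b \<eta> t S = (t - 0 - \<eta> *\<^sub>R a) - \<eta> *\<^sub>R c"
    unfolding sstep_def a_def c_def by (simp add: sum_subtractf scaleR_diff_right algebra_simps)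
  have "norm (\<Sum>i\<in>S. g 0 (h i)) \<le> (\<Sum>i\<in>S. E)"
    by (rule order_trans[OF norm_sum], rule sum_mono) (use E_bound hX in auto)
  then have nc: "norm c \<le> E" using Sp bpos by (simp add: c_def field_simps)
  have u: "(norm (t - 0 - \<eta> *\<^sub>R a))\<^sup>2 \<le> (1 - \<eta> * m) * (norm t)\<^sup>2 + 2 * \<eta> * K"
    using contr(1)[OF S h, where t=t and t'=0] unfolding a_def by simp
  have "(norm t)\<^sup>2 \<le> M\<^sup>2" using t by (simp add: power_mono)
  then have v1: "(1 - \<eta> * m) * (norm t)\<^sup>2 \<le> (1 - \<eta> * m) * M\<^sup>2"
    using eta_m by (intro mult_left_mono) auto
  have v2: "(1 - \<eta> * m) * M\<^sup>2 + 2 * \<eta> * K \<le> (M - \<eta> * E)\<^sup>2"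
  proof -
    have "\<eta> * (m * M\<^sup>2 - 2 * E * M - 2 * K) \<ge> 0" using M eta_pos by simp
    moreover have "\<eta>\<^sup>2 * E\<^sup>2 \<ge> 0" by simp
    ultimately show ?thesis by (simp add: power2_eq_square algebra_simps)
  qed
  have "(norm (t - 0 - \<eta> *\<^sub>R a))\<^sup>2 \<le> (M - \<eta> * E)\<^sup>2" using u v1 v2 by linarith
  then have "norm (t - 0 - \<eta> *\<^sub>R a) \<le> M - \<eta> * E"
  proof (rule power2_le_imp_le)
    show "0 \<le> M - \<eta> * E" using M(2) by linarith
  qed
  moreover have "norm (\<eta> *\<^sub>R c) \<le> \<eta> * E"
  proof -
    have "norm (\<eta> *\<^sub>R c) = \<eta> * norm c" using eta_pos by simp
    also have "\<dots> \<le> \<eta> * E" by (intro mult_left_mono) (use nc eta_pos in auto)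
    finally show ?thesis .
  qed
  moreover have "norm (sstep g h b \<eta> t S) \<le> norm (t - 0 - \<eta> *\<^sub>R a) + norm (\<eta> *\<^sub>R c)"
    unfolding eq by (rule norm_triangle_ineq4)
  ultimately show ?thesis by linarith
qed

lemma moment_all:
  assumes h: "\<And>i. i < n \<Longrightarrow> h i \<in> X"
    and th: "norm \<theta> \<le> M" and M: "m * M\<^sup>2 - 2 * E * M - 2 * K \<ge> 0" "\<eta> * E \<le> M"
  shows "t \<in> set_pmf (sgd_law g h n b \<eta> \<theta> k) \<Longrightarrow> norm t \<le> M"
proof (induction k arbitrary: t)
  case 0
  then show ?case using th by simp
next
  case (Suc k)
  from Suc.prems obtain t0 S where t0: "t0 \<in> set_pmf (sgd_law g h n b \<eta> \<theta> k)"
    and S: "S \<in> minibatches n b" and tt: "t = sstep g h b \<eta> t0 S"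
    unfolding sgd_law_Suc' using MB_finite MB_ne by (auto simp del: sgd_law.simps)
  show ?case unfolding tt by (rule moment_step[OF S h Suc.IH[OF t0] M])
qed

lemma pair_S:
  fixes t t' :: 'a
  assumes S: "S \<in> minibatches n b" and h: "\<And>i. i < n \<Longrightarrow> h i \<in> X"
    and h': "\<And>i. i < n \<Longrightarrow> h' i \<in> X"
    and J: "card {i. i < n \<and> h i \<noteq> h' i} \<le> 1"
  defines "\<epsilon> \<equiv> 2 * D * K2 * (2 * norm t' + 1)"
  defines "\<rho> \<equiv> real (card (S \<inter> {i. i < n \<and> h i \<noteq> h' i}))"
  shows "(norm (sstep g h b \<eta> t S - sstep g h' b \<eta> t' S))\<^sup>2
         \<le> (1 - \<eta> * m) * (norm (t - t'))\<^sup>2 + 2 * \<eta> * K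
            + 2 * (\<eta> / real b) * (1 + \<eta> * K1) * norm (t - t') * \<epsilon> * \<rho>
            + (\<eta> / real b)\<^sup>2 * \<epsilon>\<^sup>2 * \<rho>"
proof -
  define J where "J = {i. i < n \<and> h i \<noteq> h' i}"
  have Sp: "S \<subseteq> {..<n}" "card S = b" "finite S" using MB_mem[OF S] by auto
  have bpos: "real b > 0" using b_ge by simp
  define q where "q = \<eta> / real b"
  have q0: "q \<ge> 0" using eta_pos bpos by (simp add: q_def)
  define a where "a = (1 / real b) *\<^sub>R (\<Sum>i\<in>S. g t (h i) - g t' (h i))"
  define e where "e = (\<Sum>i\<in>S. g t' (h i) - g t' (h' i))"
  define A where "A = t - t' - \<eta> *\<^sub>R a"
  have eq: "sstep g h b \<eta> t S - sstep g h' b \<eta> t' S = A - q *\<^sub>R e"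
    unfolding sstep_def A_def a_def e_def q_def
    by (simp add: sum_subtractf scaleR_diff_right algebra_simps)
  have A1': "(norm A)\<^sup>2 \<le> (1 - \<eta> * m) * (norm (t - t'))\<^sup>2 + 2 * \<eta> * K"
    using contr(1)[OF S h, where t=t and t'=t'] unfolding A_def a_def by simp
  have A2': "norm A \<le> (1 + \<eta> * K1) * norm (t - t')"
    using contr(2)[OF S h, where t=t and t'=t'] unfolding A_def a_def by simp
  have eps0: "\<epsilon> \<ge> 0" unfolding \<epsilon>_def using D_nn K2_pos by simp
  have ei: "norm (g t' (h i) - g t' (h' i)) \<le> (if i \<in> J then \<epsilon> else 0)" if i: "i \<in> S" for i
  proof -
    have iN: "i < n" using i Sp by auto
    show ?thesis
    proof (cases "i \<in> J")
      case False
      then have "h i = h' i" using iN by (simp add: J_def)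
      then show ?thesis using False by simp
    next
      case True
      have "norm (h i - h' i) \<le> norm (h i) + norm (h' i)" by (rule norm_triangle_ineq4)
      also have "\<dots> \<le> 2 * D" using D_bound[OF h[OF iN]] D_bound[OF h'[OF iN]] by simp
      finally have hd: "norm (h i - h' i) \<le> 2 * D" .
      have "norm (g t' (h i) - g t' (h' i)) \<le> K2 * norm (h i - h' i) * (2 * norm t' + 1)"
        using A1[OF h[OF iN] h'[OF iN], of t' t'] by simp
      also have "\<dots> \<le> K2 * (2 * D) * (2 * norm t' + 1)"
        using hd K2_pos by (intro mult_right_mono mult_left_mono) auto
      finally show ?thesis using True by (simp add: \<epsilon>_def mult_ac)
    qed
  qed
  have "norm e \<le> (\<Sum>i\<in>S. (if i \<in> J then \<epsilon> else 0))"
    unfolding e_def by (rule order_trans[OF norm_sum], rule sum_mono) (use ei in auto)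
  also have "(\<Sum>i\<in>S. (if i \<in> J then \<epsilon> else 0)) = \<epsilon> * \<rho>"
    unfolding \<rho>_def J_def[symmetric] using Sp(3)
    by (simp add: sum.If_cases Int_def)
  finally have ne: "norm e \<le> \<epsilon> * \<rho>" .
  have rho01: "\<rho> \<le> 1" "\<rho> \<ge> 0"
  proof -
    have "finite J" unfolding J_def by simp
    then have "card (S \<inter> J) \<le> card J" by (simp add: card_mono)
    then show "\<rho> \<le> 1" using J unfolding \<rho>_def J_def by simp
  qed (simp add: \<rho>_def)
  have ne2: "(norm e)\<^sup>2 \<le> \<epsilon>\<^sup>2 * \<rho>"
  proof -
    have "(norm e)\<^sup>2 \<le> (\<epsilon> * \<rho>)\<^sup>2" using ne by (simp add: power_mono)
    also have "\<dots> = \<epsilon>\<^sup>2 * (\<rho> * \<rho>)" by (simp add: power2_eq_square)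
    also have "\<dots> \<le> \<epsilon>\<^sup>2 * \<rho>" using rho01 by (intro mult_left_mono) (use mult_left_le[of \<rho> \<rho>] in auto)
    finally show ?thesis .
  qed
  have "norm (A - q *\<^sub>R e) \<le> norm A + q * norm e"
    using norm_triangle_ineq4[of A "q *\<^sub>R e"] q0 by simp
  then have "(norm (A - q *\<^sub>R e))\<^sup>2 \<le> (norm A + q * norm e)\<^sup>2"
    by (simp add: power_mono)
  also have "\<dots> = (norm A)\<^sup>2 + 2 * q * (norm A * norm e) + q\<^sup>2 * (norm e)\<^sup>2"
    by (simp add: power2_eq_square algebra_simps)
  also have "\<dots> \<le> ((1 - \<eta> * m) * (norm (t - t'))\<^sup>2 + 2 * \<eta> * K)
       + 2 * q * (((1 + \<eta> * K1) * norm (t - t')) * (\<epsilon> * \<rho>)) + q\<^sup>2 * (\<epsilon>\<^sup>2 * \<rho>)"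
  proof (intro add_mono mult_left_mono mult_mono A1' A2' ne ne2)
  qed (use q0 eps0 rho01 eta_pos K1_pos in auto)
  finally show ?thesis unfolding eq q_def J_def by (simp add: algebra_simps add_divide_distrib)
qed

lemma count_j:
  assumes j: "j < n"
  shows "real (card {S \<in> minibatches n b. j \<in> S}) * real n = real b * real (card (minibatches n b))"
proof -
  have bij: "bij_betw (insert j) {T. T \<subseteq> {..<n} - {j} \<and> card T = b - 1} {S \<in> minibatches n b. j \<in> S}"
  proof (rule bij_betw_byWitness[where f'="\<lambda>S. S - {j}"])
    show "\<forall>T\<in>{T. T \<subseteq> {..<n} - {j} \<and> card T = b - 1}. insert j T - {j} = T" by auto
    show "\<forall>S\<in>{S \<in> minibatches n b. j \<in> S}. insert j (S - {j}) = S" by auto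
    show "insert j ` {T. T \<subseteq> {..<n} - {j} \<and> card T = b - 1} \<subseteq> {S \<in> minibatches n b. j \<in> S}"
    proof
      fix S assume "S \<in> insert j ` {T. T \<subseteq> {..<n} - {j} \<and> card T = b - 1}"
      then obtain T where T: "T \<subseteq> {..<n} - {j}" "card T = b - 1" and ST: "S = insert j T" by auto
      have "finite T" using T(1) finite_subset by blast
      have "j \<notin> T" using T(1) by auto
      then have "card S = b" using T ST b_ge \<open>finite T\<close> by simp
      then show "S \<in> {S \<in> minibatches n b. j \<in> S}" using T ST j by (auto simp: minibatches_def)
    qed
    show "(\<lambda>S. S - {j}) ` {S \<in> minibatches n b. j \<in> S} \<subseteq> {T. T \<subseteq> {..<n} - {j} \<and> card T = b - 1}"
    proof
      fix T assume "T \<in> (\<lambda>S. S - {j}) ` {S \<in> minibatches n b. j \<in> S}"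
      then obtain S where S: "S \<in> minibatches n b" "j \<in> S" and TS: "T = S - {j}" by auto
      have "finite S" "card S = b" "S \<subseteq> {..<n}" using MB_mem[OF S(1)] by auto
      then show "T \<in> {T. T \<subseteq> {..<n} - {j} \<and> card T = b - 1}" using S TS by auto
    qed
  qed
  have c1: "card {S \<in> minibatches n b. j \<in> S} = (n - 1) choose (b - 1)"
    using bij_betw_same_card[OF bij] n_subsets[of "{..<n} - {j}" "b - 1"] j by simp
  have c2: "card (minibatches n b) = n choose b"
    using n_subsets[of "{..<n}" b] unfolding minibatches_def by simp
  have "b * (n choose b) = n * ((n - 1) choose (b - 1))"
    using times_binomial_minus1_eq[of b n] b_ge by simp
  then have "real b * real (n choose b) = real n * real ((n - 1) choose (b - 1))"
    by (metis of_nat_mult)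
  then show ?thesis using c1 c2 by (simp add: mult.commute)
qed

lemma avg_rho:
  assumes J: "J \<subseteq> {..<n}" "card J \<le> 1" "finite J"
  shows "(\<Sum>S\<in>minibatches n b. real (card (S \<inter> J))) \<le> real b / real n * real (card (minibatches n b))"
proof (cases "J = {}")
  case True
  then show ?thesis by simp
next
  case False
  then obtain j where Jj: "J = {j}" using J by (metis card_1_singletonE card_0_eq le_Suc_eq One_nat_def le_zero_eq)
  have jn: "j < n" using J Jj by auto
  have "(\<Sum>S\<in>minibatches n b. real (card (S \<inter> J))) = (\<Sum>S\<in>minibatches n b. if j \<in> S then 1 else 0)"
    unfolding Jj by (rule sum.cong) auto
  also have "\<dots> = real (card {S \<in> minibatches n b. j \<in> S})"
    using MB_finite by (simp add: sum.If_cases Int_def)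
  also have "\<dots> = real b / real n * real (card (minibatches n b))"
    using count_j[OF jn] jn by (simp add: field_simps)
  finally show ?thesis by simp
qed

lemma pair_avg:
  fixes t t' :: 'a
  assumes h: "\<And>i. i < n \<Longrightarrow> h i \<in> X"
    and h': "\<And>i. i < n \<Longrightarrow> h' i \<in> X"
    and J: "card {i. i < n \<and> h i \<noteq> h' i} \<le> 1"
    and tB: "(norm t)\<^sup>2 \<le> B" and tB': "(norm t')\<^sup>2 \<le> B"
  shows "(\<Sum>S\<in>minibatches n b. (norm (sstep g h b \<eta> t S - sstep g h' b \<eta> t' S))\<^sup>2) / real (card (minibatches n b))
         \<le> (1 - \<eta> * m) * (norm (t - t'))\<^sup>2 + (2 * \<eta> * K
             + 2 * \<eta> * (1 + \<eta> * K1) * (2 * D * K2 * (1 + 5 * B)) / real n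
             + \<eta>\<^sup>2 * (4 * D\<^sup>2 * K2\<^sup>2 * (8 * B + 2)) / (real b * real n))"
proof -
  define JJ where "JJ = {i. i < n \<and> h i \<noteq> h' i}"
  define \<epsilon> where "\<epsilon> = 2 * D * K2 * (2 * norm t' + 1)"
  define \<alpha> where "\<alpha> = (1 - \<eta> * m) * (norm (t - t'))\<^sup>2 + 2 * \<eta> * K"
  define \<beta> where "\<beta> = 2 * (\<eta> / real b) * (1 + \<eta> * K1) * norm (t - t') * \<epsilon> + (\<eta> / real b)\<^sup>2 * \<epsilon>\<^sup>2"
  define C where "C = real (card (minibatches n b))"
  have Cpos: "C > 0" unfolding C_def using MB_finite MB_ne by (simp add: card_gt_0_iff)
  have bpos: "real b > 0" and npos: "real n > 0" using b_ge b_le by auto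
  have eps0: "\<epsilon> \<ge> 0" unfolding \<epsilon>_def using D_nn K2_pos by simp
  have beta0: "\<beta> \<ge> 0" unfolding \<beta>_def using eps0 eta_pos K1_pos bpos by simp
  have "(\<Sum>S\<in>minibatches n b. (norm (sstep g h b \<eta> t S - sstep g h' b \<eta> t' S))\<^sup>2)
        \<le> (\<Sum>S\<in>minibatches n b. \<alpha> + \<beta> * real (card (S \<inter> JJ)))"
  proof (rule sum_mono)
    fix S assume S: "S \<in> minibatches n b"
    show "(norm (sstep g h b \<eta> t S - sstep g h' b \<eta> t' S))\<^sup>2 \<le> \<alpha> + \<beta> * real (card (S \<inter> JJ))"
      using pair_S[OF S h h' J, of t t'] unfolding \<alpha>_def \<beta>_def \<epsilon>_def JJ_def
      by (simp add: algebra_simps)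
  qed
  also have "\<dots> = C * \<alpha> + \<beta> * (\<Sum>S\<in>minibatches n b. real (card (S \<inter> JJ)))"
    by (simp add: sum.distrib sum_distrib_left C_def)
  also have "\<dots> \<le> C * \<alpha> + \<beta> * (real b / real n * C)"
    using avg_rho[of JJ] J beta0 unfolding JJ_def C_def by (intro add_left_mono mult_left_mono) auto
  finally have s1: "(\<Sum>S\<in>minibatches n b. (norm (sstep g h b \<eta> t S - sstep g h' b \<eta> t' S))\<^sup>2) / C
      \<le> (C * \<alpha> + \<beta> * (real b / real n * C)) / C" using Cpos by (simp add: divide_right_mono)
  have s2: "(C * \<alpha> + \<beta> * (real b / real n * C)) / C = \<alpha> + \<beta> * real b / real n"
    using Cpos by (simp add: field_simps)
  have nt: "norm t \<ge> 0" "norm t' \<ge> 0" by simp_all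
  have dd: "norm (t - t') \<le> norm t + norm t'" by (rule norm_triangle_ineq4)
  have B0: "B \<ge> 0" using tB by (meson order_trans zero_le_power2)
  have p1: "norm (t - t') * (2 * norm t' + 1) \<le> 1 + 5 * B"
  proof -
    have "norm (t - t') * (2 * norm t' + 1) \<le> (norm t + norm t') * (2 * norm t' + 1)"
      using dd by (intro mult_right_mono) auto
    also have "\<dots> \<le> 1 + 5 * B"
    proof -
      define x where "x = norm t"
      define y where "y = norm t'"
      have h1: "2 * x * y \<le> x\<^sup>2 + y\<^sup>2" using zero_le_power2[of "x - y"] by (simp add: power2_diff)
      have h2: "2 * x \<le> x\<^sup>2 + 1" using zero_le_power2[of "x - 1"] by (simp add: power2_diff)
      have h3: "2 * y \<le> y\<^sup>2 + 1" using zero_le_power2[of "y - 1"] by (simp add: power2_diff)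
      have e: "(x + y) * (2 * y + 1) = 2 * x * y + x + 2 * y\<^sup>2 + y" by (simp add: power2_eq_square algebra_simps)
      show ?thesis using h1 h2 h3 e tB tB' unfolding x_def[symmetric] y_def[symmetric] by linarith
    qed
    finally show ?thesis .
  qed
  have p2: "(2 * norm t' + 1)\<^sup>2 \<le> 8 * B + 2"
  proof -
    have "(2 * norm t' + 1)\<^sup>2 = 4 * (norm t')\<^sup>2 + 4 * norm t' + 1" by (simp add: power2_eq_square algebra_simps)
    moreover have "4 * norm t' \<le> 4 * (norm t')\<^sup>2 + 1" using zero_le_power2[of "2 * norm t' - 1"] by (simp add: power2_diff power_mult_distrib)
    ultimately show ?thesis using tB' by linarith
  qed
  have DK: "D * K2 \<ge> 0" using D_nn K2_pos by simp
  have "\<beta> * real b / real n = 2 * \<eta> * (1 + \<eta> * K1) * (2 * D * K2 * (norm (t - t') * (2 * norm t' + 1))) / real n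
        + \<eta>\<^sup>2 * (4 * D\<^sup>2 * K2\<^sup>2 * (2 * norm t' + 1)\<^sup>2) / (real b * real n)"
    unfolding \<beta>_def \<epsilon>_def using bpos npos by (simp add: field_simps power2_eq_square)
  also have "\<dots> \<le> 2 * \<eta> * (1 + \<eta> * K1) * (2 * D * K2 * (1 + 5 * B)) / real n
        + \<eta>\<^sup>2 * (4 * D\<^sup>2 * K2\<^sup>2 * (8 * B + 2)) / (real b * real n)"
  proof (intro add_mono divide_right_mono mult_left_mono)
  qed (use p1 p2 DK eta_pos K1_pos bpos npos in auto)
  finally show ?thesis using s1 s2 unfolding \<alpha>_def C_def by (simp add: algebra_simps)
qed

lemma cpl_bound:
  assumes h: "\<And>i. i < n \<Longrightarrow> h i \<in> X"
    and h': "\<And>i. i < n \<Longrightarrow> h' i \<in> X"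
    and J: "card {i. i < n \<and> h i \<noteq> h' i} \<le> 1"
    and th: "norm \<theta> \<le> M" and M: "m * M\<^sup>2 - 2 * E * M - 2 * K \<ge> 0" "\<eta> * E \<le> M"
    and MB: "M\<^sup>2 \<le> B"
  defines "c \<equiv> 2 * \<eta> * K
             + 2 * \<eta> * (1 + \<eta> * K1) * (2 * D * K2 * (1 + 5 * B)) / real n
             + \<eta>\<^sup>2 * (4 * D\<^sup>2 * K2\<^sup>2 * (8 * B + 2)) / (real b * real n)"
  shows "(\<integral>\<^sup>+ z. ennreal ((norm (fst z - snd z))\<^sup>2) \<partial>measure_pmf (cpl g h h' n b \<eta> \<theta> k))
         \<le> ennreal ((1 - (1 - \<eta> * m) ^ k) * (c / (\<eta> * m)))"
proof (induction k)
  case 0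
  then show ?case by simp
next
  case (Suc k)
  define q where "q = 1 - \<eta> * m"
  have q0: "q \<ge> 0" "q \<le> 1" using eta_m eta_pos m_pos by (auto simp: q_def)
  have c0: "c \<ge> 0" unfolding c_def using eta_pos K_pos K1_pos D_nn K2_pos b_ge b_le MB
    by (intro add_nonneg_nonneg divide_nonneg_nonneg mult_nonneg_nonneg) (auto intro: order_trans[OF zero_le_power2])
  define MBs where "MBs = minibatches n b"
  have fin: "finite MBs" "MBs \<noteq> {}" using MB_finite MB_ne by (auto simp: MBs_def)
  have inner: "(\<integral>\<^sup>+ S. ennreal ((norm (sstep g h b \<eta> (fst z) S - sstep g h' b \<eta> (snd z) S))\<^sup>2) \<partial>measure_pmf (pmf_of_set MBs))
        \<le> ennreal (q * (norm (fst z - snd z))\<^sup>2 + c)"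
    if z: "z \<in> set_pmf (cpl g h h' n b \<eta> \<theta> k)" for z
  proof -
    have "fst z \<in> set_pmf (sgd_law g h n b \<eta> \<theta> k)"
      using z by (metis cpl_fst image_eqI set_map_pmf)
    then have n1: "norm (fst z) \<le> M" using moment_all[where h=h, OF h th M] by blast
    have "snd z \<in> set_pmf (sgd_law g h' n b \<eta> \<theta> k)"
      using z by (metis cpl_snd image_eqI set_map_pmf)
    then have n2: "norm (snd z) \<le> M" using moment_all[where h=h', OF h' th M] by blast
    have b1: "(norm (fst z))\<^sup>2 \<le> B" using n1 MB by (meson norm_ge_zero order_trans power_mono)
    have b2: "(norm (snd z))\<^sup>2 \<le> B" using n2 MB by (meson norm_ge_zero order_trans power_mono)
    have "(\<integral>\<^sup>+ S. ennreal ((norm (sstep g h b \<eta> (fst z) S - sstep g h' b \<eta> (snd z) S))\<^sup>2) \<partial>measure_pmf (pmf_of_set MBs))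
       = (\<Sum>S\<in>MBs. ennreal ((norm (sstep g h b \<eta> (fst z) S - sstep g h' b \<eta> (snd z) S))\<^sup>2)) / real (card MBs)"
      using fin by (subst nn_integral_pmf_of_set) (auto simp: ennreal_of_nat_eq_real_of_nat)
    also have "\<dots> = ennreal ((\<Sum>S\<in>MBs. (norm (sstep g h b \<eta> (fst z) S - sstep g h' b \<eta> (snd z) S))\<^sup>2) / real (card MBs))"
      using fin by (subst sum_ennreal) (auto intro!: divide_ennreal sum_nonneg simp: card_gt_0_iff)
    also have "\<dots> \<le> ennreal (q * (norm (fst z - snd z))\<^sup>2 + c)"
      using pair_avg[OF h h' J b1 b2] unfolding MBs_def q_def c_def by (intro ennreal_leI) (simp add: algebra_simps)
    finally show ?thesis .
  qed
  have "(\<integral>\<^sup>+ z. ennreal ((norm (fst z - snd z))\<^sup>2) \<partial>measure_pmf (cpl g h h' n b \<eta> \<theta> (Suc k)))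
      = (\<integral>\<^sup>+ z. (\<integral>\<^sup>+ S. ennreal ((norm (sstep g h b \<eta> (fst z) S - sstep g h' b \<eta> (snd z) S))\<^sup>2) \<partial>measure_pmf (pmf_of_set MBs)) \<partial>measure_pmf (cpl g h h' n b \<eta> \<theta> k))"
    by (simp add: MBs_def)
  also have "\<dots> \<le> (\<integral>\<^sup>+ z. ennreal (q * (norm (fst z - snd z))\<^sup>2 + c) \<partial>measure_pmf (cpl g h h' n b \<eta> \<theta> k))"
    by (rule nn_integral_mono_AE) (simp add: AE_measure_pmf_iff inner)
  also have "\<dots> = (\<integral>\<^sup>+ z. ennreal q * ennreal ((norm (fst z - snd z))\<^sup>2) + ennreal c \<partial>measure_pmf (cpl g h h' n b \<eta> \<theta> k))"
    using q0 c0 by (simp add: ennreal_mult)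
  also have "\<dots> = ennreal q * (\<integral>\<^sup>+ z. ennreal ((norm (fst z - snd z))\<^sup>2) \<partial>measure_pmf (cpl g h h' n b \<eta> \<theta> k)) + ennreal c"
    by (simp add: nn_integral_add nn_integral_cmult measure_pmf.emeasure_space_1)
  also have "\<dots> \<le> ennreal q * ennreal ((1 - q ^ k) * (c / (\<eta> * m))) + ennreal c"
    using Suc.IH unfolding q_def by (intro add_mono mult_left_mono) auto
  also have "\<dots> = ennreal ((1 - q ^ Suc k) * (c / (\<eta> * m)))"
  proof -
    have qk: "q ^ k \<le> 1" using q0 by (simp add: power_le_one)
    have "ennreal q * ennreal ((1 - q ^ k) * (c / (\<eta> * m))) + ennreal c
        = ennreal (q * ((1 - q ^ k) * (c / (\<eta> * m))) + c)"
      using q0 qk c0 eta_pos m_pos by (simp add: ennreal_mult[symmetric] ennreal_plus[symmetric] del: ennreal_plus)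
    also have "q * ((1 - q ^ k) * (c / (\<eta> * m))) + c = (1 - q ^ Suc k) * (c / (\<eta> * m))"
      using eta_pos m_pos unfolding q_def by (simp add: field_simps)
    finally show ?thesis .
  qed
  finally show ?case unfolding q_def .
qed

end

theorem theorem4p1:
  fixes f :: "'a::euclidean_space \<Rightarrow> 'x::euclidean_space \<Rightarrow> real"
    and g :: "'a \<Rightarrow> 'x \<Rightarrow> 'a"
    and \<X> :: "'x set"
    and D E K1 K2 m K \<eta> :: real
    and n b :: nat
    and xs xs' :: "nat \<Rightarrow> 'x"
    and \<theta> :: 'a
  assumes grad: "\<And>t x. x \<in> \<X> \<Longrightarrow> ((\<lambda>s. f s x) has_derivative (\<lambda>h. g t x \<bullet> h)) (at t)"
    and D_bound: "\<And>x. x \<in> \<X> \<Longrightarrow> norm x \<le> D"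
    and E_bound: "\<And>x. x \<in> \<X> \<Longrightarrow> norm (g 0 x) \<le> E"
    and K1_pos: "K1 > 0" and K2_pos: "K2 > 0"
    and A1: "\<And>t t' x x'. x \<in> \<X> \<Longrightarrow> x' \<in> \<X> \<Longrightarrow>
               norm (g t x - g t' x') \<le> K1 * norm (t - t') + K2 * norm (x - x') * (norm t + norm t' + 1)"
    and m_pos: "m > 0" and K_pos: "K > 0"
    and A3: "\<And>t1 t2 x. x \<in> \<X> \<Longrightarrow> (g t1 x - g t2 x) \<bullet> (t1 - t2) \<ge> m * (norm (t1 - t2))\<^sup>2 - K"
    and xs_in: "\<And>i. i < n \<Longrightarrow> xs i \<in> \<X>"
    and xs'_in: "\<And>i. i < n \<Longrightarrow> xs' i \<in> \<X>"
    and differ: "card {i. i < n \<and> xs i \<noteq> xs' i} \<le> 1"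
    and b_range: "1 \<le> b" "b \<le> n"
    and eta_pos: "\<eta> > 0"
    and eta_small: "\<eta> < min (1 / m) (m / (K1\<^sup>2 + 64 * D\<^sup>2 * K2\<^sup>2))"
  shows "\<forall>k. let r = (E + sqrt (E\<^sup>2 + 4 * m * K)) / (2 * m);
               B = 4 * (norm \<theta>)\<^sup>2 + 4 * r\<^sup>2 + 4 - 2 * \<eta> / m * K1\<^sup>2
                   - 112 * \<eta> / m * D\<^sup>2 * K2\<^sup>2 + 128 * \<eta> / m * D\<^sup>2 * K2\<^sup>2 * r\<^sup>2
                   + 4 * K / m + 2 * r\<^sup>2
           in W2sq (measure_pmf (sgd_law g xs n b \<eta> \<theta> k)) (measure_pmf (sgd_law g xs' n b \<eta> \<theta> k))
              \<le> ennreal ((1 - (1 - \<eta> * m) ^ k) *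
                   (4 * D\<^sup>2 * K2\<^sup>2 * \<eta> * (8 * B + 2) / (real b * real n * m)
                    + 4 * K2 * D * (1 + K1 * \<eta>) / (real n * m) * (1 + 5 * B)
                    + 2 * K / m))"
proof (intro allI)
  fix k
  have Xne: "xs 0 \<in> \<X>" using xs_in b_range by simp
  have E0: "E \<ge> 0" using E_bound[OF Xne] norm_ge_zero order_trans by blast
  have D0: "D \<ge> 0" using D_bound[OF Xne] norm_ge_zero order_trans by blast
  have den: "K1\<^sup>2 + 64 * D\<^sup>2 * K2\<^sup>2 > 0" using K1_pos by (simp add: add_pos_nonneg)
  have e1: "\<eta> < 1 / m" and e2: "\<eta> < m / (K1\<^sup>2 + 64 * D\<^sup>2 * K2\<^sup>2)" using eta_small by auto
  have eta_m: "\<eta> * m < 1" using e1 m_pos by (simp add: field_simps)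
  have e3: "\<eta> * (K1\<^sup>2 + 64 * D\<^sup>2 * K2\<^sup>2) < m" using e2 den by (simp add: field_simps)
  have eK1: "\<eta> * K1\<^sup>2 \<le> m" and eD: "\<eta> * (64 * D\<^sup>2 * K2\<^sup>2) \<le> m"
  proof -
    have "\<eta> * K1\<^sup>2 \<ge> 0" "\<eta> * (64 * D\<^sup>2 * K2\<^sup>2) \<ge> 0" using eta_pos by auto
    then show "\<eta> * K1\<^sup>2 \<le> m" "\<eta> * (64 * D\<^sup>2 * K2\<^sup>2) \<le> m" using e3 by (simp_all add: algebra_simps)
  qed
  interpret sgd_setup g \<X> D E K1 K2 m K \<eta> n b
    by unfold_locales (use D_bound E_bound K1_pos K2_pos A1 m_pos K_pos A3 b_range eta_pos eta_m eK1 E0 D0 in auto)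
  define s where "s = sqrt (E\<^sup>2 + 4 * m * K)"
  define r where "r = (E + sqrt (E\<^sup>2 + 4 * m * K)) / (2 * m)"
  define B where "B = 4 * (norm \<theta>)\<^sup>2 + 4 * r\<^sup>2 + 4 - 2 * \<eta> / m * K1\<^sup>2
                   - 112 * \<eta> / m * D\<^sup>2 * K2\<^sup>2 + 128 * \<eta> / m * D\<^sup>2 * K2\<^sup>2 * r\<^sup>2
                   + 4 * K / m + 2 * r\<^sup>2"
  define M where "M = max (norm \<theta>) (2 * r)"
  have s2: "s\<^sup>2 = E\<^sup>2 + 4 * m * K" unfolding s_def using m_pos K_pos E0 by simp
  have sE: "s \<ge> E"
    unfolding s_def using m_pos K_pos E0 by (intro real_le_rsqrt) simp
  have r2: "2 * r = (E + s) / m" unfolding r_def s_def using m_pos by (simp add: field_simps)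
  have rr: "m * (2 * r)\<^sup>2 - 2 * E * (2 * r) = 4 * K"
  proof -
    have "m * (2 * r)\<^sup>2 - 2 * E * (2 * r) = ((E + s)\<^sup>2 - 2 * E * (E + s)) / m"
      unfolding r2 using m_pos by (simp add: field_simps power2_eq_square)
    also have "\<dots> = (s\<^sup>2 - E\<^sup>2) / m" by (simp add: power2_eq_square algebra_simps)
    also have "\<dots> = 4 * K" unfolding s2 using m_pos by simp
    finally show ?thesis .
  qed
  have Mr: "M \<ge> 2 * r" unfolding M_def by simp
  have r0: "2 * r \<ge> 0" unfolding r2 using sE E0 m_pos by simp
  have mr: "m * (2 * r) = E + s" unfolding r2 using m_pos by simp
  have Mc: "m * M\<^sup>2 - 2 * E * M - 2 * K \<ge> 0"
  proof -
    have "(M - 2 * r) * (m * (M + 2 * r) - 2 * E) \<ge> 0"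
    proof (rule mult_nonneg_nonneg)
      show "M - 2 * r \<ge> 0" using Mr by simp
      have "m * (M + 2 * r) \<ge> m * (2 * r + 2 * r)" using Mr m_pos by (intro mult_left_mono) auto
      then show "m * (M + 2 * r) - 2 * E \<ge> 0" using mr sE E0 by (simp add: algebra_simps)
    qed
    then have "m * M\<^sup>2 - 2 * E * M \<ge> m * (2 * r)\<^sup>2 - 2 * E * (2 * r)"
      by (simp add: power2_eq_square algebra_simps)
    then show ?thesis using rr K_pos by simp
  qed
  have Me: "\<eta> * E \<le> M"
  proof -
    have "\<eta> * E \<le> (1 / m) * E" using e1 E0 by (intro mult_right_mono) auto
    also have "\<dots> \<le> 2 * r" unfolding r2 using sE E0 m_pos by (simp add: divide_right_mono)
    finally show ?thesis using Mr by simp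
  qed
  have MB: "M\<^sup>2 \<le> B"
  proof -
    have "M\<^sup>2 \<le> (norm \<theta>)\<^sup>2 + (2 * r)\<^sup>2" unfolding M_def by (auto simp: max_def)
    moreover have "2 * \<eta> / m * K1\<^sup>2 \<le> 2" using eK1 m_pos by (simp add: field_simps)
    moreover have "112 * \<eta> / m * D\<^sup>2 * K2\<^sup>2 \<le> 2"
    proof -
      have "112 * \<eta> / m * D\<^sup>2 * K2\<^sup>2 = (7 / 4) * (\<eta> * (64 * D\<^sup>2 * K2\<^sup>2)) / m" by (simp add: field_simps)
      also have "\<dots> \<le> (7 / 4) * m / m" using eD m_pos by (intro divide_right_mono) auto
      finally show ?thesis using m_pos by simp
    qed
    moreover have "128 * \<eta> / m * D\<^sup>2 * K2\<^sup>2 * r\<^sup>2 \<ge> 0" "4 * K / m \<ge> 0" using eta_pos m_pos K_pos by auto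
    moreover have "(norm \<theta>)\<^sup>2 \<ge> 0" "r\<^sup>2 \<ge> 0" by simp_all
    ultimately show ?thesis unfolding B_def by (simp add: power_mult_distrib, linarith)
  qed
  have thM: "norm \<theta> \<le> M" unfolding M_def by simp
  define c where "c = 2 * \<eta> * K
             + 2 * \<eta> * (1 + \<eta> * K1) * (2 * D * K2 * (1 + 5 * B)) / real n
             + \<eta>\<^sup>2 * (4 * D\<^sup>2 * K2\<^sup>2 * (8 * B + 2)) / (real b * real n)"
  have "W2sq (measure_pmf (sgd_law g xs n b \<eta> \<theta> k)) (measure_pmf (sgd_law g xs' n b \<eta> \<theta> k))
        \<le> (\<integral>\<^sup>+ z. ennreal ((norm (fst z - snd z))\<^sup>2) \<partial>measure_pmf (cpl g xs xs' n b \<eta> \<theta> k))"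
    using W2sq_pmf_le[of "cpl g xs xs' n b \<eta> \<theta> k"] unfolding cpl_fst cpl_snd .
  also have "\<dots> \<le> ennreal ((1 - (1 - \<eta> * m) ^ k) * (c / (\<eta> * m)))"
    unfolding c_def by (rule cpl_bound[OF xs_in xs'_in differ thM Mc Me MB])
  also have "c / (\<eta> * m) = 4 * D\<^sup>2 * K2\<^sup>2 * \<eta> * (8 * B + 2) / (real b * real n * m)
                    + 4 * K2 * D * (1 + K1 * \<eta>) / (real n * m) * (1 + 5 * B)
                    + 2 * K / m"
    unfolding c_def using eta_pos m_pos b_range by (simp add: field_simps power2_eq_square)
  finally have main: "W2sq (measure_pmf (sgd_law g xs n b \<eta> \<theta> k)) (measure_pmf (sgd_law g xs' n b \<eta> \<theta> k))
     \<le> ennreal ((1 - (1 - \<eta> * m) ^ k) *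
                   (4 * D\<^sup>2 * K2\<^sup>2 * \<eta> * (8 * B + 2) / (real b * real n * m)
                    + 4 * K2 * D * (1 + K1 * \<eta>) / (real n * m) * (1 + 5 * B)
                    + 2 * K / m))" .
  then show "let r = (E + sqrt (E\<^sup>2 + 4 * m * K)) / (2 * m);
               B = 4 * (norm \<theta>)\<^sup>2 + 4 * r\<^sup>2 + 4 - 2 * \<eta> / m * K1\<^sup>2
                   - 112 * \<eta> / m * D\<^sup>2 * K2\<^sup>2 + 128 * \<eta> / m * D\<^sup>2 * K2\<^sup>2 * r\<^sup>2
                   + 4 * K / m + 2 * r\<^sup>2
           in W2sq (measure_pmf (sgd_law g xs n b \<eta> \<theta> k)) (measure_pmf (sgd_law g xs' n b \<eta> \<theta> k))
              \<le> ennreal ((1 - (1 - \<eta> * m) ^ k) *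
                   (4 * D\<^sup>2 * K2\<^sup>2 * \<eta> * (8 * B + 2) / (real b * real n * m)
                    + 4 * K2 * D * (1 + K1 * \<eta>) / (real n * m) * (1 + 5 * B)
                    + 2 * K / m))"
    unfolding Let_def B_def r_def .
qed

end
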